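(* Let $C_n(a,b)$ be a connected $2$-regular circulant digraph (so $\gcd(n,a,b)=1$). Let $l\ge 1$ and $0\le k\le l$ be integers, and suppose $la+k(b-a)=\omega n$ for some integer $\omega$. Then the number of primitive periodic orbits of $C_n(a,b)$ of length $l$ with $b$-count $k$ is $$|\mathcal{P}_{l,k}(C_n(a,b))|=\frac{n}{l}\sum_{m\mid \gcd(l,k,\omega)}\mu(m)\binom{l/m}{k/m},$$ where $\mu$ is the Möbius function.
   Context: Let $n\ge 2$ and $0<a<b<n$ be integers. The directed circulant graph $C_n(a,b)$ has vertex set $\mathbb{Z}_n$ and directed bonds $(v,v+a)$ and $(v,v+b)$ for each $v\in\mathbb{Z}_n$ (addition mod $n$); the bond $(v,v+s)$ has step size $s\in\{a,b\}$. It is (strongly) connected iff $\gcd(n,a,b)=1$. A path of length $l$ is a sequence of bonds $(e_1,\dots,e_l)$ where the terminus of $e_j$ is the origin of $e_{j+1}$; its $b$-count is the number of bonds of step size $b$ in it; its step sequence is the sequence of step sizes. A circuit is a path whose last terminus equals its first origin; a path of length $l$ and $b$-count $k$ is a circuit iff $n$ divides its transit distance $(l-k)a+kb$, and the winding number is the transit distance divided by $n$. A periodic orbit is an equivalence class of circuits under cyclic rotation $\sigma(e_1,\dots,e_l)=(e_2,\dots,e_l,e_1)$; length, $b$-count and winding number are well defined on orbits. For a circuit $c$, $c^r$ denotes the concatenation of $r$ copies of $c$. A periodic orbit $p$ is primitive if there is no circuit $c_0$ and integer $r>1$ with $p=[c_0^r]$. $\mathcal{P}_{l,k}(C_n(a,b))$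 denotes the set of primitive periodic orbits of length $l$ and $b$-count $k$. *)

theory Defs
  imports Complex_Main "HOL-Computational_Algebra.Squarefree"
begin

definition moebius :: "nat \<Rightarrow> int" where
  "moebius m = (if squarefree m then (-1) ^ card (prime_factors m) else 0)"

text \<open>Bonds of C_n(a,b): a bond (v, s) with v in Z_n (represented by 0..n-1) and step size s in {a,b};
  its origin is v and its terminus is (v + s) mod n.\<close>
type_synonym bond = "nat \<times> nat"

definition is_bond :: "nat \<Rightarrow> nat \<Rightarrow> nat \<Rightarrow> bond \<Rightarrow> bool" where
  "is_bond n a b e \<longleftrightarrow> fst e < n \<and> (snd e = a \<or> snd e = b)"

definition origin :: "bond \<Rightarrow> nat" where
  "origin e = fst e"

definition terminus :: "nat \<Rightarrow> bond \<Rightarrow> nat" where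
  "terminus n e = (fst e + snd e) mod n"

definition is_path :: "nat \<Rightarrow> nat \<Rightarrow> nat \<Rightarrow> bond list \<Rightarrow> bool" where
  "is_path n a b es \<longleftrightarrow> (\<forall>e\<in>set es. is_bond n a b e) \<and>
     (\<forall>j. Suc j < length es \<longrightarrow> terminus n (es ! j) = origin (es ! Suc j))"

definition is_circuit :: "nat \<Rightarrow> nat \<Rightarrow> nat \<Rightarrow> bond list \<Rightarrow> bool" where
  "is_circuit n a b es \<longleftrightarrow> es \<noteq> [] \<and> is_path n a b es \<and> terminus n (last es) = origin (hd es)"

definition b_count :: "nat \<Rightarrow> bond list \<Rightarrow> nat" where
  "b_count b es = length (filter (\<lambda>e. snd e = b) es)"

definition orbit_of :: "bond list \<Rightarrow> bond list set" where
  "orbit_of c = {rotate i c | i. True}"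

definition periodic_orbits :: "nat \<Rightarrow> nat \<Rightarrow> nat \<Rightarrow> bond list set set" where
  "periodic_orbits n a b = {orbit_of c | c. is_circuit n a b c}"

definition primitive_orbit :: "nat \<Rightarrow> nat \<Rightarrow> nat \<Rightarrow> bond list set \<Rightarrow> bool" where
  "primitive_orbit n a b p \<longleftrightarrow>
     \<not> (\<exists>c0 r. is_circuit n a b c0 \<and> r > 1 \<and> p = orbit_of (concat (replicate r c0)))"

definition prim_orbits :: "nat \<Rightarrow> nat \<Rightarrow> nat \<Rightarrow> nat \<Rightarrow> nat \<Rightarrow> bond list set set" where
  "prim_orbits n a b l k = {p \<in> periodic_orbits n a b. primitive_orbit n a b p \<and>
     (\<forall>c\<in>p. length c = l \<and> b_count b c = k)}"

end

theory Submission
  imports Defs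
begin

lemma sqf_pf: fixes d :: nat assumes "squarefree d"
  shows "prime_factorization d = mset_set (prime_factors d)"
proof (rule multiset_eqI)
  fix p
  have d0: "d \<noteq> 0" using assms by (metis not_squarefree_0)
  show "count (prime_factorization d) p = count (mset_set (prime_factors d)) p"
  proof (cases "p \<in> prime_factors d")
    case True
    then have "prime p" by auto
    then have "count (prime_factorization d) p = multiplicity p d"
      by (simp add: count_prime_factorization_prime)
    also have "\<dots> = 1" using True assms d0 squarefree_factorial_semiring' by blast
    finally show ?thesis using True by simp
  next
    case False
    then show ?thesis by (simp add: not_in_iff)
  qed
qed

lemma pf_prod: fixes A :: "nat set" assumes "finite A" "\<forall>p\<in>A. prime p"
  shows "prime_factorization (\<Prod>A) = mset_set A"
  using assms
proof (induction A rule: finite_induct)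
  case empty then show ?case by simp
next
  case (insert p A)
  have "\<Prod>A \<noteq> 0" using insert by auto
  moreover have "p \<noteq> 0" using insert.prems by (metis insertI1 not_prime_0)
  ultimately have "prime_factorization (\<Prod>(insert p A)) = prime_factorization p + prime_factorization (\<Prod>A)"
    using insert by (simp add: prime_factorization_mult)
  then show ?case using insert by (simp add: prime_factorization_prime)
qed

lemma moebius_prod: fixes A :: "nat set" assumes "finite A" "\<forall>p\<in>A. prime p"
  shows "moebius (\<Prod>A) = (-1) ^ card A" and "prime_factors (\<Prod>A) = A" and "squarefree (\<Prod>A)"
proof -
  have pf: "prime_factorization (\<Prod>A) = mset_set A" using pf_prod assms by blast
  show pfs: "prime_factors (\<Prod>A) = A" using pf assms by simp
  have nz: "\<Prod>A \<noteq> 0" using assms by (metis not_prime_0 prod_zero_iff)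
  show sq: "squarefree (\<Prod>A)"
  proof (subst squarefree_factorial_semiring'[OF nz], intro ballI)
    fix p assume "p \<in> prime_factors (\<Prod>A)"
    then have "prime p" "p \<in> A" using pfs by auto
    then show "multiplicity p (\<Prod>A) = 1"
      using pf assms by (metis count_mset_set(1) count_prime_factorization_prime)
  qed
  show "moebius (\<Prod>A) = (-1) ^ card A" using sq pfs by (simp add: moebius_def)
qed

lemma moebius_sum: assumes "(m::nat) > 0"
  shows "(\<Sum>d\<in>{d. d > 0 \<and> d dvd m}. moebius d) = (if m = 1 then 1 else 0)"
proof -
  define P where "P = prime_factors m"
  have finP: "finite P" unfolding P_def by simp
  have primeP: "\<forall>p\<in>P. prime p" unfolding P_def by auto
  define D where "D = {d. d > 0 \<and> d dvd m}"
  have finD: "finite D" unfolding D_def using assms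
    by (metis (no_types, lifting) finite_divisors_nat mem_Collect_eq rev_finite_subset subsetI)
  have inj: "inj_on Prod (Pow P)"
    proof
      fix A B assume "A \<in> Pow P" "B \<in> Pow P" "\<Prod>A = \<Prod>B"
      then have "finite A" "finite B" "\<forall>p\<in>A. prime p" "\<forall>p\<in>B. prime p" 
        using finP primeP finite_subset by auto
      then show "A = B" using moebius_prod(2) \<open>\<Prod>A = \<Prod>B\<close> by metis
    qed
  have "(\<Sum>d\<in>D. moebius d) = (\<Sum>d\<in>D. if squarefree d then (-1) ^ card (prime_factors d) else 0)"
    by (simp add: moebius_def)
  also have "\<dots> = (\<Sum>d\<in>{d\<in>D. squarefree d}. (-1) ^ card (prime_factors d))"
    using finD by (simp add: sum.inter_filter)
  also have "{d\<in>D. squarefree d} = Prod ` Pow P"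
  proof
    show "{d\<in>D. squarefree d} \<subseteq> Prod ` Pow P"
    proof
      fix d assume d: "d \<in> {d\<in>D. squarefree d}"
      then have d0: "d > 0" "d dvd m" "squarefree d" unfolding D_def by auto
      have "prime_factorization (\<Prod>(prime_factors d)) = prime_factorization d"
        using pf_prod[of "prime_factors d"] sqf_pf[OF d0(3)] by auto
      moreover have "\<Prod>(prime_factors d) \<noteq> 0"
        by (metis finite_set_mset in_prime_factors_imp_prime not_prime_0 prod_zero_iff)
      ultimately have "\<Prod>(prime_factors d) = d"
        using d0 prime_factorization_unique[of "\<Prod>(prime_factors d)" d] by simp
      moreover have "prime_factors d \<subseteq> P" unfolding P_def using d0 assms dvd_prime_factors[of m d] by simp
      ultimately show "d \<in> Prod ` Pow P" by (intro image_eqI[where x="prime_factors d"]) auto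
    qed
  next
    show "Prod ` Pow P \<subseteq> {d\<in>D. squarefree d}"
    proof
      fix d assume "d \<in> Prod ` Pow P"
      then obtain A where A: "A \<subseteq> P" "d = \<Prod>A" by auto
      have finA: "finite A" using A finP finite_subset by blast
      have pA: "\<forall>p\<in>A. prime p" using A primeP by auto
      have nz: "d \<noteq> 0" using A pA by (metis not_prime_0 prod_zero_iff finA)
      have "mset_set A \<subseteq># prime_factorization m"
      proof (rule mset_subset_eqI)
        fix p show "count (mset_set A) p \<le> count (prime_factorization m) p"
        proof (cases "p \<in> A")
          case True
          then have "p \<in># prime_factorization m" using A P_def by auto
          then show ?thesis using True finA by simp
        next
          case False then show ?thesis by (simp add: not_in_iff)
        qed
      qed
      then have "d dvd m" unfolding A(2) 
        by (intro prime_factorization_subset_imp_dvd) (use nz A(2) pf_prod[OF finA pA] in auto)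
      then show "d \<in> {d\<in>D. squarefree d}" using nz moebius_prod(3)[OF finA pA] A unfolding D_def by auto
    qed
  qed
  also have "(\<Sum>d\<in>Prod ` Pow P. (-1) ^ card (prime_factors d)) = (\<Sum>A\<in>Pow P. ((-1::int) ^ card (prime_factors (\<Prod>A))))"
    using sum.reindex[OF inj, of "\<lambda>d. (-1::int) ^ card (prime_factors d)"] by (simp add: comp_def)
  also have "\<dots> = (\<Sum>A\<in>Pow P. ((-1::int) ^ card A))"
    proof (rule sum.cong[OF refl])
      fix A assume "A \<in> Pow P"
      then have "finite A" "\<forall>p\<in>A. prime p" using finP primeP finite_subset by auto
      then show "(-1) ^ card (prime_factors (\<Prod>A)) = ((-1::int) ^ card A)"
        using moebius_prod(2) by simp
    qed
  also have "\<dots> = (\<Prod>x\<in>P. (1::int) - 1)"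
  proof -
    have "(\<Prod>x\<in>P. (1::int) - 1) = (\<Sum>X\<in>Pow P. (-1) ^ card X * (\<Prod>x\<in>X. 1) * (\<Prod>x\<in>P-X. 1))"
      by (rule prod_diff_conv_sum[OF finP])
    then show ?thesis by (simp only: prod.neutral_const mult_1_right)
  qed
  also have "\<dots> = (if m = 1 then 1 else 0)"
  proof (cases "P = {}")
    case True
    then have "prime_factorization m = {#}" unfolding P_def by simp
    then have "m = 1" using assms by (simp add: prime_factorization_empty_iff)
    then show ?thesis using True by simp
  next
    case False
    then have "m \<noteq> 1" unfolding P_def by auto
    then show ?thesis using False finP by (simp add: card_gt_0_iff)
  qed
  finally show ?thesis unfolding D_def .
qed


lemma rot_back: "rotate (length x - i mod length x) (rotate i x) = x"
proof (cases "x = []")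
  case True then show ?thesis by simp
next
  case False
  then have "(length x - i mod length x + i) mod length x = 0"
    by (metis add.commute le_add_diff_inverse2 mod_add_left_eq mod_le_divisor mod_self length_greater_0_conv)
  then show ?thesis by (simp add: rotate_rotate)
qed

lemma rot_inj: "length x = length y \<Longrightarrow> rotate i x = rotate i y \<Longrightarrow> x = y"
  using rot_back[of x i] rot_back[of y i] by metis

lemma rot_mult: "rotate d c = c \<Longrightarrow> rotate (d * x) c = c"
proof (induction x)
  case 0 then show ?case by simp
next
  case (Suc x)
  have "rotate (d * Suc x) c = rotate d (rotate (d*x) c)" by (simp add: rotate_rotate add.commute)
  then show ?case using Suc by simp
qed

lemma rot_gcd: assumes "d \<noteq> 0" "rotate d c = c" "rotate e c = c" shows "rotate (gcd d e) c = c"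
proof -
  obtain x y where xy: "d * x = e * y + gcd d e" using bezout_nat[OF assms(1)] by blast
  have "c = rotate (d*x) c" using rot_mult assms by metis
  also have "\<dots> = rotate (gcd d e) (rotate (e*y) c)" by (simp add: xy rotate_rotate add.commute)
  also have "\<dots> = rotate (gcd d e) c" using rot_mult assms by metis
  finally show ?thesis by simp
qed

definition pw :: "nat \<Rightarrow> 'a list \<Rightarrow> 'a list" where "pw r c = concat (replicate r c)"

lemma length_pw[simp]: "length (pw r c) = r * length c"
  by (simp add: pw_def length_concat sum_list_replicate)

lemma nth_pw: "i < r * length c \<Longrightarrow> pw r c ! i = c ! (i mod length c)"
proof (induction r arbitrary: i)
  case 0 then show ?case by simp
next
  case (Suc r)
  have e: "pw (Suc r) c = c @ pw r c" by (simp add: pw_def)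
  show ?case
  proof (cases "i < length c")
    case True then show ?thesis by (simp add: e nth_append)
  next
    case False
    then have "i - length c < r * length c" using Suc.prems by auto
    then show ?thesis using False Suc.IH[of "i - length c"] by (simp add: e nth_append mod_if)
  qed
qed

lemma rotate_pw: "rotate (length c) (pw r c) = pw r c"
proof (cases r)
  case 0 then show ?thesis by (simp add: pw_def)
next
  case (Suc s)
  have "pw (Suc s) c = c @ pw s c" by (simp add: pw_def)
  moreover have "pw s c @ c = pw (Suc s) c" by (simp add: pw_def replicate_append_same[symmetric])
  ultimately show ?thesis using Suc by (simp add: rotate_append)
qed

lemma take_pw: "r > 0 \<Longrightarrow> take (length c) (pw r c) = c"
  by (cases r) (auto simp: pw_def)

lemma periodic_nth:
  assumes "0 < p" "p dvd length c" "rotate p c = c"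
  shows "\<forall>i < length c. c ! i = c ! (i mod p)"
proof (intro allI impI)
  fix i show "i < length c \<Longrightarrow> c ! i = c ! (i mod p)"
  proof (induction i rule: less_induct)
    case (less i)
    show ?case
    proof (cases "i < p")
      case True then show ?thesis by simp
    next
      case False
      have l: "i - p < length c" using less.prems by auto
      have "c ! (i - p) = rotate p c ! (i - p)" using assms by simp
      also have "\<dots> = c ! ((p + (i - p)) mod length c)" using nth_rotate[OF l] by simp
      also have "\<dots> = c ! i" using False less.prems by simp
      finally have "c ! i = c ! (i - p)" by simp
      also have "\<dots> = c ! ((i - p) mod p)" using less.IH[of "i - p"] l assms False by simp
      also have "(i - p) mod p = i mod p" using False by (simp add: le_mod_geq)
      finally show ?thesis .
    qed
  qed
qed

lemma periodic_pw:
  assumes "0 < p" "p dvd length c" "rotate p c = c"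
  shows "c = pw (length c div p) (take p c)"
proof (cases "c = []")
  case True then show ?thesis by (simp add: pw_def)
next
  case False
  show ?thesis
proof (rule nth_equalityI)
  have pl: "p \<le> length c" using assms False by (simp add: dvd_imp_le)
  show "length c = length (pw (length c div p) (take p c))"
    using assms pl by (simp add: min_def)
  fix i assume i: "i < length c"
  have "pw (length c div p) (take p c) ! i = take p c ! (i mod p)"
    using nth_pw[of i "length c div p" "take p c"] i pl assms by (simp add: min_def)
  also have "\<dots> = c ! (i mod p)" using assms by simp
  also have "\<dots> = c ! i" using periodic_nth[OF assms] i by simp
  finally show "c ! i = pw (length c div p) (take p c) ! i" by simp
qed
qed


lemma circ_iff: "is_circuit n a b c \<longleftrightarrow> c \<noteq> [] \<and> (\<forall>e\<in>set c. is_bond n a b e) \<and>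
   (\<forall>j<length c. terminus n (c!j) = origin (c ! (Suc j mod length c)))"
proof
  assume H: "is_circuit n a b c"
  then have ne: "c \<noteq> []" and p: "is_path n a b c" and cl: "terminus n (last c) = origin (hd c)"
    unfolding is_circuit_def by auto
  have "\<forall>j<length c. terminus n (c!j) = origin (c ! (Suc j mod length c))"
  proof (intro allI impI)
    fix j assume j: "j < length c"
    show "terminus n (c!j) = origin (c ! (Suc j mod length c))"
    proof (cases "Suc j < length c")
      case True then show ?thesis using p unfolding is_path_def by simp
    next
      case False
      then have jj: "j = length c - 1" using j by simp
      have "Suc j mod length c = 0" using jj ne by simp
      then show ?thesis using cl ne jj by (simp add: last_conv_nth hd_conv_nth)
    qed
  qed
  then show "c \<noteq> [] \<and> (\<forall>e\<in>set c. is_bond n a b e) \<and>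
   (\<forall>j<length c. terminus n (c!j) = origin (c ! (Suc j mod length c)))"
    using ne p unfolding is_path_def by auto
next
  assume H: "c \<noteq> [] \<and> (\<forall>e\<in>set c. is_bond n a b e) \<and>
   (\<forall>j<length c. terminus n (c!j) = origin (c ! (Suc j mod length c)))"
  then have ne: "c \<noteq> []" by auto
  have "is_path n a b c" unfolding is_path_def using H by auto
  moreover have "terminus n (last c) = origin (hd c)"
    using H[THEN conjunct2, THEN conjunct2, rule_format, of "length c - 1"] ne
    by (simp add: last_conv_nth hd_conv_nth)
  ultimately show "is_circuit n a b c" using ne unfolding is_circuit_def by auto
qed

lemma rot_circ: assumes "is_circuit n a b c" shows "is_circuit n a b (rotate d c)"
proof -
  have H: "c \<noteq> []" "\<forall>e\<in>set c. is_bond n a b e"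
     "\<forall>j<length c. terminus n (c!j) = origin (c ! (Suc j mod length c))"
    using assms circ_iff by auto
  let ?l = "length c"
  have "\<forall>j<length (rotate d c). terminus n (rotate d c!j) = origin (rotate d c ! (Suc j mod length (rotate d c)))"
  proof (intro allI impI)
    fix j assume j: "j < length (rotate d c)"
    then have j': "j < ?l" by simp
    have m: "(d + j) mod ?l < ?l" using H(1) by simp
    have "rotate d c ! j = c ! ((d + j) mod ?l)" using nth_rotate[OF j'] by simp
    moreover have "rotate d c ! (Suc j mod ?l) = c ! ((d + Suc j mod ?l) mod ?l)"
      using nth_rotate[of "Suc j mod ?l" c d] H(1) by simp
    moreover have "(d + Suc j mod ?l) mod ?l = Suc ((d + j) mod ?l) mod ?l"
      by (simp add: mod_add_right_eq mod_Suc_eq)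
    ultimately show "terminus n (rotate d c!j) = origin (rotate d c ! (Suc j mod length (rotate d c)))"
      using H(3) m by simp
  qed
  then show ?thesis using H circ_iff by (simp add: set_rotate)
qed

lemma b_count_rot: "b_count b (rotate d c) = b_count b c"
  unfolding b_count_def rotate_drop_take by (metis append_take_drop_id filter_append length_append add.commute)

lemma circ_pw: assumes "is_circuit n a b c" "r > 0" shows "is_circuit n a b (pw r c)"
proof -
  have H: "c \<noteq> []" "\<forall>e\<in>set c. is_bond n a b e"
     "\<forall>j<length c. terminus n (c!j) = origin (c ! (Suc j mod length c))"
    using assms circ_iff by auto
  let ?l = "length c"
  have ne: "pw r c \<noteq> []" using H(1) assms(2) by (metis length_0_conv length_pw mult_is_0 not_gr0)
  have "set (pw r c) = set c" using assms(2) by (simp add: pw_def)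
  moreover have "\<forall>j<length (pw r c). terminus n (pw r c!j) = origin (pw r c ! (Suc j mod length (pw r c)))"
  proof (intro allI impI)
    fix j assume j: "j < length (pw r c)"
    have "0 < r * ?l" using j length_pw[of r c] by linarith
    then have "Suc j mod (r * ?l) < r * ?l" by simp
    then have "pw r c ! (Suc j mod length (pw r c)) = c ! (Suc j mod (r*?l) mod ?l)"
      using nth_pw by simp
    also have "Suc j mod (r*?l) mod ?l = Suc (j mod ?l) mod ?l"
      by (simp add: mod_mod_cancel mod_Suc_eq)
    finally show "terminus n (pw r c!j) = origin (pw r c ! (Suc j mod length (pw r c)))"
      using H(3) H(1) nth_pw[of j r c] j by simp
  qed
  ultimately show ?thesis using ne H circ_iff by auto
qed

lemma b_count_pw: "b_count b (pw r c) = r * b_count b c"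
  unfolding b_count_def pw_def by (induction r) auto

lemma circ_take: assumes "is_circuit n a b c" "0 < p" "p dvd length c" "rotate p c = c"
  shows "is_circuit n a b (take p c)"
proof -
  have H: "c \<noteq> []" "\<forall>e\<in>set c. is_bond n a b e"
     "\<forall>j<length c. terminus n (c!j) = origin (c ! (Suc j mod length c))"
    using assms circ_iff by auto
  have pl: "p \<le> length c" using assms H(1) by (simp add: dvd_imp_le)
  have per: "\<forall>i < length c. c ! i = c ! (i mod p)" using periodic_nth assms(2-4) by blast
  have "\<forall>j<length (take p c). terminus n (take p c!j) = origin (take p c ! (Suc j mod length (take p c)))"
  proof (intro allI impI)
    fix j assume j: "j < length (take p c)"
    then have jp: "j < p" by simp
    have "Suc j mod p < p" using assms(2) by simp
    have "take p c ! (Suc j mod length (take p c)) = c ! (Suc j mod p)" using pl assms(2) by (simp add: min_def)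
    also have "\<dots> = c ! (Suc j mod length c mod p)" using assms(3) by (simp add: mod_mod_cancel)
    also have "\<dots> = c ! (Suc j mod length c)" using per H(1) by simp
    finally show "terminus n (take p c!j) = origin (take p c ! (Suc j mod length (take p c)))"
      using H(3) jp pl by simp
  qed
  moreover have "take p c \<noteq> []" using assms(2) H(1) by simp
  moreover have "\<forall>e\<in>set (take p c). is_bond n a b e" using H(2) by (meson in_set_takeD)
  ultimately show ?thesis using circ_iff by blast
qed


lemma path_fst: assumes "is_path n a b c" "j < length c"
  shows "fst (c!j) = (fst (c!0) + sum_list (take j (map snd c))) mod n"
  using assms(2)
proof (induction j)
  case 0
  have "c!0 \<in> set c" using 0 by simp
  then have "fst (c!0) < n" using assms(1) unfolding is_path_def is_bond_def by auto
  then show ?case by simp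
next
  case (Suc j)
  have "fst (c ! Suc j) = origin (c ! Suc j)" by (simp add: origin_def)
  also have "\<dots> = terminus n (c!j)" using assms(1) Suc.prems unfolding is_path_def by simp
  also have "\<dots> = (fst (c!j) + snd (c!j)) mod n" by (simp add: terminus_def)
  also have "\<dots> = ((fst (c!0) + sum_list (take j (map snd c))) mod n + snd (c!j)) mod n"
    using Suc by simp
  also have "\<dots> = (fst (c!0) + sum_list (take (Suc j) (map snd c))) mod n"
    using Suc.prems by (simp add: take_Suc_conv_app_nth mod_add_left_eq add.assoc)
  finally show ?case .
qed

lemma circ_sum_dvd: assumes "is_circuit n a b c" shows "n dvd sum_list (map snd c)"
proof -
  have ne: "c \<noteq> []" and p: "is_path n a b c" using assms unfolding is_circuit_def by auto
  have H: "\<forall>j<length c. terminus n (c!j) = origin (c ! (Suc j mod length c))"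
    using assms circ_iff by blast
  define l where "l = length c"
  have l0: "0 < l" using ne l_def by simp
  define v where "v = fst (c!0)"
  have "c!0 \<in> set c" using ne by simp
  then have vn: "v < n" using p unfolding v_def is_path_def is_bond_def by auto
  have "terminus n (c!(l-1)) = origin (c!0)" using H[rule_format, of "l-1"] l0 l_def by simp
  then have "(fst (c!(l-1)) + snd (c!(l-1))) mod n = v" by (simp add: terminus_def origin_def v_def)
  moreover have "fst (c!(l-1)) = (v + sum_list (take (l-1) (map snd c))) mod n"
    using path_fst[OF p, of "l-1"] l0 l_def v_def by simp
  ultimately have "((v + sum_list (take (l-1) (map snd c))) mod n + snd (c!(l-1))) mod n = v" by simp
  moreover have "take l (map snd c) = take (l-1) (map snd c) @ [snd (c!(l-1))]"
    using take_Suc_conv_app_nth[of "l-1" "map snd c"] l0 l_def by simp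
  ultimately have "(v + sum_list (take l (map snd c))) mod n = v"
    by (simp add: mod_add_left_eq add.assoc)
  then have "(v + sum_list (map snd c)) mod n = v mod n" using vn l_def by simp
  then show ?thesis using mod_eq_dvd_iff_nat[of v "v + sum_list (map snd c)" n] by simp
qed

lemma sum_w0: "set w \<subseteq> {a,a+d} \<Longrightarrow> 
  sum_list w = length w * a + length (filter (\<lambda>x. x = a+d) w) * (d::nat)"
  by (induction w) (auto simp: algebra_simps)

lemma sum_w: "set w \<subseteq> {a,b} \<Longrightarrow> (a::nat) \<le> b \<Longrightarrow>
  sum_list w = length w * a + length (filter (\<lambda>x. x = b) w) * (b - a)"
  using sum_w0[of w a "b-a"] by simp

lemma b_count_steps: "b_count b c = length (filter (\<lambda>x. x = b) (map snd c))"
  unfolding b_count_def by (simp add: filter_map comp_def)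



lemma card_W: assumes "(a::nat) \<noteq> b"
  shows "card {w. length w = L \<and> set w \<subseteq> {a,b} \<and> length (filter (\<lambda>x. x = b) w) = K} = L choose K"
proof -
  define W where "W = {w. length w = L \<and> set w \<subseteq> {a,b} \<and> length (filter (\<lambda>x. x = b) w) = K}"
  define T where "T = {B. B \<subseteq> {0..<L} \<and> card B = K}"
  define G where "G = (\<lambda>w. {i. i < L \<and> w ! i = b})"
  have cardG: "length (filter (\<lambda>x. x = b) w) = card (G w)" if "length w = L" for w
    using that unfolding G_def by (simp add: length_filter_conv_card)
  have "bij_betw G W T"
  proof (rule bij_betw_imageI)
    show "inj_on G W"
    proof
      fix w w' assume w: "w \<in> W" and w': "w' \<in> W" and e: "G w = G w'"
      show "w = w'"
      proof (rule nth_equalityI)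
        show "length w = length w'" using w w' unfolding W_def by simp
        fix i assume i: "i < length w"
        have iL: "i < L" using i w unfolding W_def by simp
        have "w ! i \<in> set w" using i by simp
        then have "w ! i \<in> {a,b}" using w unfolding W_def by blast
        moreover have "w' ! i \<in> set w'" using iL w' unfolding W_def by simp
        then have "w' ! i \<in> {a,b}" using w' unfolding W_def by blast
        moreover have "(w ! i = b) = (w' ! i = b)" using e iL unfolding G_def by blast
        ultimately show "w ! i = w' ! i" by auto
      qed
    qed
    show "G ` W = T"
    proof
      show "G ` W \<subseteq> T"
      proof
        fix B assume "B \<in> G ` W"
        then obtain w where w: "w \<in> W" "B = G w" by auto
        then show "B \<in> T" using cardG[of w] unfolding W_def T_def G_def by auto
      qed
    next
      show "T \<subseteq> G ` W"
      proof
        fix B assume B: "B \<in> T"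
        define w where "w = map (\<lambda>i. if i \<in> B then b else a) [0..<L]"
        have Gw: "G w = B" using B assms unfolding G_def w_def T_def by (auto split: if_splits)
        have lw: "length w = L" by (simp add: w_def)
        have sw: "set w \<subseteq> {a,b}" by (auto simp: w_def)
        have "card B = K" using B T_def by simp
        then have "w \<in> W" using cardG[OF lw] Gw lw sw unfolding W_def by simp
        then show "B \<in> G ` W" using Gw by blast
      qed
    qed
  qed
  then have "card W = card T" by (rule bij_betw_same_card)
  also have "\<dots> = L choose K" unfolding T_def using n_subsets[of "{0..<L}" K] by simp
  finally show ?thesis unfolding W_def .
qed


lemma count_circ: assumes "0 < n" "a < b" "0 < L" "n dvd L*a + K*(b-a)"
  shows "card {c. is_circuit n a b c \<and> length c = L \<and> b_count b c = K} = n * (L choose K)"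
proof -
  define C where "C = {c. is_circuit n a b c \<and> length c = L \<and> b_count b c = K}"
  define W where "W = {w. length w = L \<and> set w \<subseteq> {a,b} \<and> length (filter (\<lambda>x. x = b) w) = K}"
  define F where "F = (\<lambda>c::bond list. (fst (hd c), map snd c))"
  have "bij_betw F C ({0..<n} \<times> W)"
  proof (rule bij_betw_imageI)
    show "inj_on F C"
    proof
      fix c c' assume c: "c \<in> C" and c': "c' \<in> C" and e: "F c = F c'"
      have pc: "is_path n a b c" "c \<noteq> []" "length c = L" using c unfolding C_def is_circuit_def by auto
      have pc': "is_path n a b c'" "c' \<noteq> []" "length c' = L" using c' unfolding C_def is_circuit_def by auto
      have s: "map snd c = map snd c'" and h: "fst (c!0) = fst (c'!0)"
        using e pc pc' unfolding F_def by (auto simp: hd_conv_nth)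
      show "c = c'"
      proof (rule nth_equalityI)
        show "length c = length c'" using pc pc' by simp
        fix j assume j: "j < length c"
        have "snd (c!j) = snd (c'!j)" using s j pc pc' nth_map[of j c snd] nth_map[of j c' snd] by simp
        moreover have "fst (c!j) = fst (c'!j)"
          using path_fst[OF pc(1) j] path_fst[of n a b c' j] pc' pc j s h by simp
        ultimately show "c!j = c'!j" by (simp add: prod_eq_iff)
      qed
    qed
    show "F ` C = {0..<n} \<times> W"
    proof
      show "F ` C \<subseteq> {0..<n} \<times> W"
      proof
        fix x assume "x \<in> F ` C"
        then obtain c where c: "c \<in> C" "x = F c" by auto
        have cc: "is_circuit n a b c" "length c = L" "b_count b c = K" using c C_def by auto
        have bonds: "\<forall>e\<in>set c. is_bond n a b e" and ne: "c \<noteq> []"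
          using cc unfolding is_circuit_def is_path_def by auto
        have "fst (hd c) < n" using bonds ne unfolding is_bond_def by simp
        moreover have "set (map snd c) \<subseteq> {a,b}" using bonds unfolding is_bond_def by auto
        ultimately show "x \<in> {0..<n} \<times> W" using c cc b_count_steps[of b c] unfolding F_def W_def by auto
      qed
    next
      show "{0..<n} \<times> W \<subseteq> F ` C"
      proof
        fix x assume x: "x \<in> {0..<n} \<times> W"
        then obtain v w where vw: "x = (v, w)" "v < n" "w \<in> W" by auto
        have lw: "length w = L" and sw: "set w \<subseteq> {a,b}" and kw: "length (filter (\<lambda>x. x = b) w) = K"
          using vw(3) unfolding W_def by simp_all
        define c where "c = map (\<lambda>j. ((v + sum_list (take j w)) mod n, w!j)) [0..<L]"
        have lc: "length c = L" by (simp add: c_def)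
        have cj: "c ! j = ((v + sum_list (take j w)) mod n, w!j)" if "j < L" for j
          using that unfolding c_def by simp
        have sumw: "sum_list w = L*a + K*(b-a)" using sum_w[OF sw] assms(2) lw kw by simp
        have circ: "is_circuit n a b c"
        proof -
          have "c \<noteq> []" using lc assms(3) by auto
          moreover have "\<forall>e\<in>set c. is_bond n a b e"
          proof
            fix e assume "e \<in> set c"
            then obtain j where j: "j < length c" "e = c!j" by (auto simp: in_set_conv_nth)
            then have j: "j < L" "e = c!j" using lc by auto
            have "w ! j \<in> set w" using j lw by simp
            then show "is_bond n a b e" using j cj sw assms(1) unfolding is_bond_def by auto
          qed
          moreover have "\<forall>j<length c. terminus n (c!j) = origin (c ! (Suc j mod length c))"
          proof (intro allI impI)
            fix j assume j: "j < length c"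
            have "terminus n (c!j) = ((v + sum_list (take j w)) mod n + w!j) mod n"
              using cj j lc by (simp add: terminus_def)
            also have "\<dots> = (v + sum_list (take (Suc j) w)) mod n"
              using j lc lw by (simp add: take_Suc_conv_app_nth mod_add_left_eq add.assoc)
            also have "\<dots> = origin (c ! (Suc j mod length c))"
            proof (cases "Suc j < L")
              case True then show ?thesis using cj lc by (simp add: origin_def)
            next
              case False
              then have sj: "Suc j = L" using j lc by simp
              have "(v + sum_list (take (Suc j) w)) mod n = (v + sum_list w) mod n" using sj lw by simp
              also have "\<dots> = (v + sum_list w mod n) mod n" by (rule mod_add_right_eq[symmetric])
              also have "sum_list w mod n = 0" using sumw assms(4) by simp
              also have "(v + 0) mod n = v" using vw(2) by simp
              finally show ?thesis using cj assms(3) lc sj vw(2) by (simp add: origin_def)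
            qed
            finally show "terminus n (c!j) = origin (c ! (Suc j mod length c))" .
          qed
          ultimately show ?thesis using circ_iff by blast
        qed
        have "map snd c = map (\<lambda>j. w!j) [0..<length w]" using lw by (simp add: c_def comp_def)
        also have "\<dots> = w" by (rule map_nth)
        finally have ms: "map snd c = w" .
        have "b_count b c = K" using b_count_steps[of b c] ms kw by simp
        then have "c \<in> C" using circ lc C_def by simp
        moreover have "hd c = c ! 0" using lc assms(3) by (intro hd_conv_nth) auto
        then have "F c = (v, w)" using ms cj[of 0] assms(3) vw(2) lc
          unfolding F_def by simp
        ultimately show "x \<in> F ` C" using vw(1) by (metis rev_image_eqI)
      qed
    qed
  qed
  then have "card C = card ({0..<n} \<times> W)" by (rule bij_betw_same_card)
  also have "\<dots> = n * card W" by (simp add: card_cartesian_product)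
  also have "card W = L choose K" unfolding W_def using card_W assms(2) by simp
  finally show ?thesis unfolding C_def .
qed


lemma orb_rot: "rotate i c \<in> orbit_of c" unfolding orbit_of_def by blast

lemma orb_self: "c \<in> orbit_of c" using orb_rot[of 0 c] by simp

lemma orb_eq: assumes "x \<in> orbit_of c" shows "orbit_of x = orbit_of c"
proof -
  obtain i where x: "x = rotate i c" using assms unfolding orbit_of_def by blast
  have c: "c = rotate (length c - i mod length c) x" using rot_back[of c i] x by simp
  show ?thesis
  proof
    show "orbit_of x \<subseteq> orbit_of c" unfolding orbit_of_def x by (auto simp: rotate_rotate)
    show "orbit_of c \<subseteq> orbit_of x" unfolding orbit_of_def using c by (auto simp: rotate_rotate) (metis rotate_rotate)
  qed
qed

lemma rotate_fix_rot: "rotate d (rotate i c) = rotate i c \<Longrightarrow> rotate d c = c"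
  by (metis rot_inj length_rotate rotate_rotate add.commute)

lemma period: assumes "c \<noteq> []"
  shows "\<exists>p. 0 < p \<and> p dvd length c \<and> (\<forall>d. rotate d c = c \<longleftrightarrow> p dvd d)"
proof -
  define p where "p = (LEAST d. 0 < d \<and> rotate d c = c)"
  have ex: "0 < length c \<and> rotate (length c) c = c" using assms by simp
  have p: "0 < p" "rotate p c = c" using LeastI[of "\<lambda>d. 0 < d \<and> rotate d c = c", OF ex] p_def by auto
  have iff: "rotate d c = c \<longleftrightarrow> p dvd d" for d
  proof
    assume d: "rotate d c = c"
    show "p dvd d"
    proof (cases "d = 0")
      case True then show ?thesis by simp
    next
      case False
      have q: "rotate (gcd d p) c = c" using rot_gcd[OF False d p(2)] .
      have "0 < gcd d p" using p by simp
      then have "p \<le> gcd d p" using q p_def by (simp add: Least_le)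
      moreover have "gcd d p \<le> p" using p by simp
      ultimately have "gcd d p = p" by simp
      then show ?thesis by (metis gcd_dvd1)
    qed
  next
    assume "p dvd d"
    then obtain x where "d = p * x" by blast
    then show "rotate d c = c" using rot_mult p by simp
  qed
  moreover have "p dvd length c" using iff ex by blast
  ultimately show ?thesis using p by blast
qed

lemma prim_equiv: assumes "is_circuit n a b c"
  shows "primitive_orbit n a b (orbit_of c) \<longleftrightarrow> (\<forall>d. 0 < d \<and> d < length c \<longrightarrow> rotate d c \<noteq> c)"
proof
  assume po: "primitive_orbit n a b (orbit_of c)"
  show "\<forall>d. 0 < d \<and> d < length c \<longrightarrow> rotate d c \<noteq> c"
  proof (intro allI impI notI)
    fix d assume d: "0 < d \<and> d < length c" and rd: "rotate d c = c"
    define q where "q = gcd d (length c)"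
    have rq: "rotate q c = c" using rot_gcd[of d c "length c"] d rd q_def by simp
    have q0: "0 < q" using d q_def by simp
    have qd: "q dvd length c" using q_def by simp
    have "q \<le> d" unfolding q_def using d by (intro gcd_le1_nat) auto
    then have ql: "q < length c" using d by linarith
    have c: "c = pw (length c div q) (take q c)" using periodic_pw[OF q0 qd rq] .
    have ct: "is_circuit n a b (take q c)" using circ_take[OF assms q0 qd rq] .
    have r1: "length c div q > 1" using ql q0 qd by (metis dvd_div_mult_self less_one nat_neq_iff div_less mult.left_neutral nat_mult_less_cancel1 not_less0 mult_0)
    have "orbit_of c = orbit_of (concat (replicate (length c div q) (take q c)))"
      using c unfolding pw_def by simp
    then show False using po ct r1 unfolding primitive_orbit_def by blast
  qed
next
  assume pr: "\<forall>d. 0 < d \<and> d < length c \<longrightarrow> rotate d c \<noteq> c"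
  show "primitive_orbit n a b (orbit_of c)"
    unfolding primitive_orbit_def
  proof
    assume "\<exists>c0 r. is_circuit n a b c0 \<and> r > 1 \<and> orbit_of c = orbit_of (concat (replicate r c0))"
    then obtain c0 r where c0: "is_circuit n a b c0" "r > 1" "orbit_of c = orbit_of (pw r c0)"
      unfolding pw_def by blast
    have "c \<in> orbit_of (pw r c0)" using c0(3) orb_self by metis
    then obtain i where ci: "c = rotate i (pw r c0)" unfolding orbit_of_def by blast
    have "rotate (length c0) c = rotate i (rotate (length c0) (pw r c0))" using ci by (simp add: rotate_rotate add.commute)
    then have rc: "rotate (length c0) c = c" using rotate_pw ci by metis
    have "c0 \<noteq> []" using c0(1) unfolding is_circuit_def by simp
    then have "0 < length c0" "length c0 < length c" using ci c0(2) by auto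
    then show False using pr rc by blast
  qed
qed


definition Pset :: "nat \<Rightarrow> nat \<Rightarrow> nat \<Rightarrow> nat \<Rightarrow> nat \<Rightarrow> bond list set" where
  "Pset n a b l k = {c. is_circuit n a b c \<and> length c = l \<and> b_count b c = k \<and> (\<forall>d. 0<d \<and> d<l \<longrightarrow> rotate d c \<noteq> c)}"

lemma prim_orbits_eq: "prim_orbits n a b l k = orbit_of ` Pset n a b l k"
proof
  show "prim_orbits n a b l k \<subseteq> orbit_of ` Pset n a b l k"
  proof
    fix p assume p: "p \<in> prim_orbits n a b l k"
    then obtain c where c: "p = orbit_of c" "is_circuit n a b c"
      unfolding prim_orbits_def periodic_orbits_def by blast
    have "c \<in> p" using c orb_self by simp
    then have lk: "length c = l" "b_count b c = k" using p unfolding prim_orbits_def by auto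
    have "primitive_orbit n a b p" using p unfolding prim_orbits_def by auto
    then have "\<forall>d. 0<d \<and> d<l \<longrightarrow> rotate d c \<noteq> c" using prim_equiv[OF c(2)] c(1) lk by simp
    then have "c \<in> Pset n a b l k" using c lk unfolding Pset_def by simp
    then show "p \<in> orbit_of ` Pset n a b l k" using c by blast
  qed
next
  show "orbit_of ` Pset n a b l k \<subseteq> prim_orbits n a b l k"
  proof
    fix p assume "p \<in> orbit_of ` Pset n a b l k"
    then obtain c where c: "p = orbit_of c" "c \<in> Pset n a b l k" by blast
    have cc: "is_circuit n a b c" "length c = l" "b_count b c = k" "\<forall>d. 0<d \<and> d<l \<longrightarrow> rotate d c \<noteq> c"
      using c(2) unfolding Pset_def by auto
    have "p \<in> periodic_orbits n a b" using c cc unfolding periodic_orbits_def by blast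
    moreover have "primitive_orbit n a b p" using prim_equiv[OF cc(1)] cc c by simp
    moreover have "\<forall>x\<in>p. length x = l \<and> b_count b x = k"
      using c(1) cc unfolding orbit_of_def by (auto simp: b_count_rot)
    ultimately show "p \<in> prim_orbits n a b l k" unfolding prim_orbits_def by blast
  qed
qed

lemma card_orb: assumes "c \<noteq> []" "\<forall>d. 0<d \<and> d<length c \<longrightarrow> rotate d c \<noteq> c"
  shows "card (orbit_of c) = length c"
proof -
  have "orbit_of c = (\<lambda>i. rotate i c) ` {..<length c}"
  proof
    show "orbit_of c \<subseteq> (\<lambda>i. rotate i c) ` {..<length c}"
    proof
      fix x assume "x \<in> orbit_of c"
      then obtain i where "x = rotate i c" unfolding orbit_of_def by blast
      then have "x = rotate (i mod length c) c" by (simp add: rotate_conv_mod[of i c])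
      moreover have "i mod length c < length c" using assms(1) by simp
      ultimately show "x \<in> (\<lambda>i. rotate i c) ` {..<length c}" by blast
    qed
    show "(\<lambda>i. rotate i c) ` {..<length c} \<subseteq> orbit_of c" using orb_rot by blast
  qed
  moreover have "inj_on (\<lambda>i. rotate i c) {..<length c}"
  proof -
    have *: "False" if "i < j" "j < length c" "rotate i c = rotate j c" for i j
    proof -
      have "rotate i (rotate (j - i) c) = rotate j c" using that by (simp add: rotate_rotate)
      then have "rotate i (rotate (j - i) c) = rotate i c" using that by simp
      then have "rotate (j - i) c = c" using rot_inj[of "rotate (j-i) c" c i] by simp
      then show False using assms(2) that by auto
    qed
    show ?thesis
    proof (rule inj_onI)
      fix i j assume "i \<in> {..<length c}" "j \<in> {..<length c}" "rotate i c = rotate j c"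
      then show "i = j" using *[of i j] *[of j i] by (metis lessThan_iff nat_neq_iff)
    qed
  qed
  ultimately show ?thesis by (simp add: card_image)
qed

lemma Pset_rot: assumes "c \<in> Pset n a b l k" shows "rotate i c \<in> Pset n a b l k"
proof -
  have cc: "is_circuit n a b c" "length c = l" "b_count b c = k" "\<forall>d. 0<d \<and> d<l \<longrightarrow> rotate d c \<noteq> c"
      using assms unfolding Pset_def by auto
  have "\<forall>d. 0<d \<and> d<l \<longrightarrow> rotate d (rotate i c) \<noteq> rotate i c"
    using cc(4) rotate_fix_rot by blast
  then show ?thesis using cc rot_circ[OF cc(1)] b_count_rot unfolding Pset_def by auto
qed

lemma l_card: assumes "finite (Pset n a b l k)"
  shows "l * card (orbit_of ` Pset n a b l k) = card (Pset n a b l k)"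
proof -
  let ?P = "Pset n a b l k"
  have U: "\<Union>(orbit_of ` ?P) = ?P"
  proof
    show "\<Union>(orbit_of ` ?P) \<subseteq> ?P" using Pset_rot unfolding orbit_of_def by blast
    show "?P \<subseteq> \<Union>(orbit_of ` ?P)" using orb_self by blast
  qed
  have "l * card (orbit_of ` ?P) = card (\<Union>(orbit_of ` ?P))"
  proof (rule card_partition)
    show "finite (orbit_of ` ?P)" using assms by simp
    show "finite (\<Union>(orbit_of ` ?P))" using U assms by simp
    show "\<And>c. c \<in> orbit_of ` ?P \<Longrightarrow> card c = l"
    proof -
      fix x assume "x \<in> orbit_of ` ?P"
      then obtain c where c: "x = orbit_of c" "c \<in> ?P" by blast
      have "is_circuit n a b c" "length c = l" "\<forall>d. 0<d \<and> d<l \<longrightarrow> rotate d c \<noteq> c"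
        using c(2) unfolding Pset_def by auto
      moreover then have "c \<noteq> []" unfolding is_circuit_def by simp
      ultimately show "card x = l" using card_orb c(1) by metis
    qed
    show "\<And>c1 c2. c1 \<in> orbit_of ` ?P \<Longrightarrow> c2 \<in> orbit_of ` ?P \<Longrightarrow> c1 \<noteq> c2 \<Longrightarrow> c1 \<inter> c2 = {}"
    proof -
      fix c1 c2 assume "c1 \<in> orbit_of ` ?P" "c2 \<in> orbit_of ` ?P" "c1 \<noteq> c2"
      then obtain x1 x2 where x: "c1 = orbit_of x1" "c2 = orbit_of x2" by blast
      show "c1 \<inter> c2 = {}"
      proof (rule ccontr)
        assume "c1 \<inter> c2 \<noteq> {}"
        then obtain y where "y \<in> orbit_of x1" "y \<in> orbit_of x2" using x by blast
        then have "orbit_of x1 = orbit_of x2" using orb_eq by metis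
        then show False using x \<open>c1 \<noteq> c2\<close> by simp
      qed
    qed
  qed
  then show ?thesis using U by simp
qed


lemma sum_pw: "sum_list (map f (pw r x)) = r * sum_list (map f x)"
  unfolding pw_def by (induction r) auto

lemma circ_sum: assumes "is_circuit n a b c" "a \<le> b"
  shows "sum_list (map snd c) = length c * a + b_count b c * (b - a)"
proof -
  have "\<forall>e\<in>set c. is_bond n a b e" using assms unfolding is_circuit_def is_path_def by auto
  then have "set (map snd c) \<subseteq> {a,b}" unfolding is_bond_def by auto
  then show ?thesis using sum_w[of "map snd c" a b] assms(2) b_count_steps[of b c] by simp
qed

lemma key:
  fixes \<omega> :: int
  assumes n0: "0 < n" and ab: "a < b" and l0: "0 < l"
    and eq: "int l * int a + int k * (int b - int a) = \<omega> * int n"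
    and c: "is_circuit n a b c" "length c = l" "b_count b c = k"
  shows "(\<Sum>r\<in>{m::nat. m > 0 \<and> int m dvd gcd (int l) (gcd (int k) \<omega>)}.
            moebius r * (if rotate (l div r) c = c then 1 else 0))
         = (if (\<forall>d. 0<d \<and> d<l \<longrightarrow> rotate d c \<noteq> c) then 1 else 0)"
proof -
  define Dg where "Dg = {m::nat. m > 0 \<and> int m dvd gcd (int l) (gcd (int k) \<omega>)}"
  have ne: "c \<noteq> []" using c unfolding is_circuit_def by simp
  obtain p where p: "0 < p" "p dvd l" "\<And>d. rotate d c = c \<longleftrightarrow> p dvd d"
    using period[OF ne] c(2) by blast
  define R where "R = l div p"
  have lpR: "l = p * R" using p(2) R_def by simp
  have R0: "0 < R" using lpR l0 by (metis gr0I mult_0_right)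
  have rp: "rotate p c = c" using p(3) by simp
  have cpw: "c = pw R (take p c)" using periodic_pw[OF p(1) _ rp] p(2) c(2) R_def by simp
  have ct: "is_circuit n a b (take p c)" using circ_take[OF c(1) p(1) _ rp] p(2) c(2) by simp
  have "k = R * b_count b (take p c)" using c(3) cpw b_count_pw by metis
  then have Rk: "int R dvd int k" by simp
  have Rl: "int R dvd int l" using lpR by simp
  obtain t where t: "sum_list (map snd (take p c)) = n * t" using circ_sum_dvd[OF ct] by blast
  have "sum_list (map snd c) = R * (n * t)" using sum_pw[of snd R "take p c"] cpw t by metis
  moreover have "sum_list (map snd c) = l * a + k * (b - a)" using circ_sum[OF c(1)] ab c by simp
  ultimately have h: "R * (n * t) = l * a + k * (b - a)" by simp
  have "int (l * a + k * (b - a)) = int l * int a + int k * (int b - int a)"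
    using ab by (simp add: of_nat_diff)
  then have "int (R * (n * t)) = int l * int a + int k * (int b - int a)" using h by simp
  then have "int R * int t * int n = \<omega> * int n" using eq by (simp add: algebra_simps)
  then have "\<omega> = int R * int t" using n0 by simp
  then have Rw: "int R dvd \<omega>" by simp
  have RDg: "\<And>r. r > 0 \<Longrightarrow> r dvd R \<Longrightarrow> r \<in> Dg"
  proof -
    fix r assume r: "r > 0" "r dvd R"
    then have "int r dvd int R" by simp
    moreover have "int R dvd gcd (int l) (gcd (int k) \<omega>)" using Rk Rl Rw by simp
    ultimately have "int r dvd gcd (int l) (gcd (int k) \<omega>)" by (rule dvd_trans)
    then show "r \<in> Dg" unfolding Dg_def using r by simp
  qed
  have crit: "rotate (l div r) c = c \<longleftrightarrow> r dvd R" if r: "r \<in> Dg" for r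
  proof -
    have r0: "r > 0" and "int r dvd int l" using r unfolding Dg_def by (auto intro: dvd_trans)
    then have rl: "r dvd l" by simp
    then obtain s where s: "l = r * s" by blast
    have "rotate (l div r) c = c \<longleftrightarrow> p dvd s" using p(3) s r0 by simp
    also have "\<dots> \<longleftrightarrow> r dvd R"
    proof
      assume "p dvd s"
      then obtain u where u: "s = p * u" by blast
      have "p * R = p * (r * u)" by (simp only: lpR[symmetric] s u mult.left_commute)
      then have "R = r * u" using p(1) by auto
      then show "r dvd R" by simp
    next
      assume "r dvd R"
      then obtain u where u: "R = r * u" by blast
      have "r * s = r * (p * u)" by (simp only: s[symmetric] lpR u mult.left_commute)
      then have "s = p * u" using r0 by auto
      then show "p dvd s" by simp
    qed
    finally show ?thesis .
  qed
  have finDg: "finite Dg"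
  proof (rule finite_subset)
    show "Dg \<subseteq> {..l}"
    proof
      fix m assume "m \<in> Dg"
      then have "int m dvd int l" unfolding Dg_def by (auto intro: dvd_trans)
      then have "m dvd l" by simp
      then show "m \<in> {..l}" using l0 by (simp add: dvd_imp_le)
    qed
  qed simp
  have "(\<Sum>r\<in>Dg. moebius r * (if rotate (l div r) c = c then 1 else 0))
      = (\<Sum>r\<in>Dg. if r dvd R then moebius r else 0)"
    using crit by (intro sum.cong) auto
  also have "\<dots> = (\<Sum>r\<in>{r\<in>Dg. r dvd R}. moebius r)" using finDg by (simp add: sum.inter_filter)
  also have "{r\<in>Dg. r dvd R} = {r. r > 0 \<and> r dvd R}" using RDg unfolding Dg_def by auto
  also have "(\<Sum>r\<in>{r. r > 0 \<and> r dvd R}. moebius r) = (if R = 1 then 1 else 0)"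
    using moebius_sum[OF R0] by simp
  also have "(R = 1) \<longleftrightarrow> (\<forall>d. 0<d \<and> d<l \<longrightarrow> rotate d c \<noteq> c)"
  proof
    assume "R = 1"
    then have "p = l" using lpR by simp
    then show "\<forall>d. 0<d \<and> d<l \<longrightarrow> rotate d c \<noteq> c" using p(3) by (auto dest: dvd_imp_le)
  next
    assume H: "\<forall>d. 0<d \<and> d<l \<longrightarrow> rotate d c \<noteq> c"
    have "p \<le> l" using p(2) l0 by (simp add: dvd_imp_le)
    moreover have "\<not> p < l" using H p(1) rp by blast
    ultimately have "p = l" by simp
    then show "R = 1" using R_def l0 by simp
  qed
  finally show ?thesis unfolding Dg_def .
qed


lemma count_Sr:
  fixes \<omega> :: int
  assumes n0: "0 < n" and ab: "a < b" and l0: "0 < l"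
    and eq: "int l * int a + int k * (int b - int a) = \<omega> * int n"
    and r: "r > 0" "int r dvd gcd (int l) (gcd (int k) \<omega>)"
  shows "card {c. is_circuit n a b c \<and> length c = l \<and> b_count b c = k \<and> rotate (l div r) c = c}
         = n * ((l div r) choose (k div r))"
proof -
  have "int r dvd int l" "int r dvd int k" "r dvd l" "r dvd k" "int r dvd \<omega>"
    using r(2) by (auto intro: dvd_trans)
  then obtain l' k' w' where lk: "l = r * l'" "k = r * k'" "\<omega> = int r * w'" by (metis dvdE)
  have l'0: "0 < l'" using lk l0 by simp
  have ld: "l div r = l'" "k div r = k'" using lk r by auto
  define T where "T = {c. is_circuit n a b c \<and> length c = l' \<and> b_count b c = k'}"
  define Sr where "Sr = {c. is_circuit n a b c \<and> length c = l \<and> b_count b c = k \<and> rotate (l div r) c = c}"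
  have "int r * (int l' * int a + int k' * (int b - int a)) = int r * (w' * int n)"
    using eq lk by (simp add: algebra_simps)
  then have e2: "int l' * int a + int k' * (int b - int a) = w' * int n" using r by simp
  have "int (l' * a + k' * (b - a)) = int l' * int a + int k' * (int b - int a)"
    using ab by (simp add: of_nat_diff)
  then have "int n dvd int (l' * a + k' * (b - a))" using e2 by simp
  then have ndvd: "n dvd l' * a + k' * (b - a)" by (simp only: of_nat_dvd_iff)
  have cT: "card T = n * (l' choose k')" unfolding T_def using count_circ[OF n0 ab l'0 ndvd] .
  have "bij_betw (pw r) T Sr"
  proof (rule bij_betw_imageI)
    show "inj_on (pw r) T"
    proof
      fix x y assume x: "x \<in> T" and y: "y \<in> T" and e: "pw r x = pw r y"
      have "length x = length y" using x y T_def by simp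
      then show "x = y" using take_pw[OF r(1), of x] take_pw[OF r(1), of y] e by metis
    qed
    show "pw r ` T = Sr"
    proof
      show "pw r ` T \<subseteq> Sr"
      proof
        fix z assume "z \<in> pw r ` T"
        then obtain x where x: "x \<in> T" "z = pw r x" by blast
        have xx: "is_circuit n a b x" "length x = l'" "b_count b x = k'" using x T_def by auto
        have "rotate (l div r) z = z" using rotate_pw[of x r] xx(2) ld x(2) by simp
        then show "z \<in> Sr" unfolding Sr_def using circ_pw[OF xx(1) r(1)] xx x(2) lk b_count_pw by simp
      qed
      show "Sr \<subseteq> pw r ` T"
      proof
        fix z assume "z \<in> Sr"
        then have zz: "is_circuit n a b z" "length z = l" "b_count b z = k" "rotate l' z = z"
          unfolding Sr_def using ld by auto
        have dv: "l' dvd length z" using zz(2) lk by simp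
        have zp: "z = pw r (take l' z)" using periodic_pw[OF l'0 dv zz(4)] zz(2) lk l'0 by simp
        have ct: "is_circuit n a b (take l' z)" using circ_take[OF zz(1) l'0 dv zz(4)] .
        have "k = r * b_count b (take l' z)" using zz(3) zp b_count_pw by metis
        then have "b_count b (take l' z) = k'" using lk r by simp
        moreover have "length (take l' z) = l'" using zz(2) lk r(1) by simp
        ultimately have "take l' z \<in> T" using ct T_def by simp
        then show "z \<in> pw r ` T" using zp by blast
      qed
    qed
  qed
  then have "card Sr = card T" by (simp add: bij_betw_same_card)
  then show ?thesis using cT ld Sr_def by simp
qed


lemma card_sum_int: "finite S \<Longrightarrow> int (card {c\<in>S. Q c}) = (\<Sum>c\<in>S. if Q c then 1 else 0)"
  by (simp add: sum.inter_filter[symmetric])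

theorem theorem1:
  fixes n a b l k :: nat and \<omega> :: int
  assumes "n \<ge> 2" and "0 < a" and "a < b" and "b < n"
    and "gcd n (gcd a b) = 1"
    and "l \<ge> 1" and "k \<le> l"
    and "int l * int a + int k * (int b - int a) = \<omega> * int n"
  shows "real (card (prim_orbits n a b l k)) =
    real n / real l *
      (\<Sum>m\<in>{m::nat. m > 0 \<and> int m dvd gcd (int l) (gcd (int k) \<omega>)}.
          of_int (moebius m) * real ((l div m) choose (k div m)))"
proof -
  have n0: "0 < n" using assms by simp
  have l0: "0 < l" using assms by simp
  have ab: "a < b" using assms by simp
  have eq: "int l * int a + int k * (int b - int a) = \<omega> * int n" using assms by simp
  define Dg where "Dg = {m::nat. m > 0 \<and> int m dvd gcd (int l) (gcd (int k) \<omega>)}"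
  define S where "S = {c. is_circuit n a b c \<and> length c = l \<and> b_count b c = k}"
  define prim where "prim = (\<lambda>c::bond list. \<forall>d. 0<d \<and> d<l \<longrightarrow> rotate d c \<noteq> c)"
  have "int (l * a + k * (b - a)) = int l * int a + int k * (int b - int a)"
    using ab by (simp add: of_nat_diff)
  then have "int n dvd int (l * a + k * (b - a))" using eq by simp
  then have ndvd: "n dvd l * a + k * (b - a)" by (simp only: of_nat_dvd_iff)
  have cS: "card S = n * (l choose k)" unfolding S_def using count_circ[OF n0 ab l0 ndvd] .
  have "card S > 0" using cS n0 assms(7) by simp
  then have finS: "finite S" using card_ge_0_finite by blast
  have finDg: "finite Dg"
  proof (rule finite_subset)
    show "Dg \<subseteq> {..l}"
    proof
      fix m assume "m \<in> Dg"
      then have "int m dvd int l" unfolding Dg_def by (auto intro: dvd_trans)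
      then have "m dvd l" by simp
      then show "m \<in> {..l}" using l0 by (simp add: dvd_imp_le)
    qed
  qed simp
  have PS: "Pset n a b l k = {c\<in>S. prim c}" unfolding Pset_def S_def prim_def by auto
  have finP: "finite (Pset n a b l k)" using PS finS by simp
  have lc: "l * card (prim_orbits n a b l k) = card (Pset n a b l k)"
    using l_card[OF finP] prim_orbits_eq by simp
  have "int (card (Pset n a b l k)) = (\<Sum>c\<in>S. if prim c then 1 else 0)"
    using PS card_sum_int[OF finS] by simp
  also have "\<dots> = (\<Sum>c\<in>S. \<Sum>r\<in>Dg. moebius r * (if rotate (l div r) c = c then 1 else 0))"
  proof (rule sum.cong[OF refl])
    fix c assume "c \<in> S"
    then have "is_circuit n a b c" "length c = l" "b_count b c = k" unfolding S_def by auto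
    then show "(if prim c then 1 else 0) = (\<Sum>r\<in>Dg. moebius r * (if rotate (l div r) c = c then 1 else 0))"
      using key[OF n0 ab l0 eq] unfolding Dg_def prim_def by simp
  qed
  also have "\<dots> = (\<Sum>r\<in>Dg. \<Sum>c\<in>S. moebius r * (if rotate (l div r) c = c then 1 else 0))"
    by (rule sum.swap)
  also have "\<dots> = (\<Sum>r\<in>Dg. moebius r * int (n * ((l div r) choose (k div r))))"
  proof (rule sum.cong[OF refl])
    fix r assume r: "r \<in> Dg"
    have "(\<Sum>c\<in>S. moebius r * (if rotate (l div r) c = c then 1 else 0))
        = moebius r * (\<Sum>c\<in>S. if rotate (l div r) c = c then 1 else 0)"
      by (simp add: sum_distrib_left)
    also have "(\<Sum>c\<in>S. if rotate (l div r) c = c then 1 else 0) = int (card {c\<in>S. rotate (l div r) c = c})"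
      using card_sum_int[OF finS] by simp
    also have "{c\<in>S. rotate (l div r) c = c} = {c. is_circuit n a b c \<and> length c = l \<and> b_count b c = k \<and> rotate (l div r) c = c}"
      unfolding S_def by auto
    also have "card \<dots> = n * ((l div r) choose (k div r))"
      using count_Sr[OF n0 ab l0 eq] r unfolding Dg_def by simp
    finally show "(\<Sum>c\<in>S. moebius r * (if rotate (l div r) c = c then 1 else 0))
        = moebius r * int (n * ((l div r) choose (k div r)))" .
  qed
  finally have I: "int (l * card (prim_orbits n a b l k)) = (\<Sum>r\<in>Dg. moebius r * int (n * ((l div r) choose (k div r))))"
    using lc by simp
  have "real l * real (card (prim_orbits n a b l k)) = real_of_int (int (l * card (prim_orbits n a b l k)))"
    by simp
  also have "\<dots> = (\<Sum>r\<in>Dg. of_int (moebius r) * (real n * real ((l div r) choose (k div r))))"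
    unfolding I by (simp add: of_int_sum)
  also have "\<dots> = real n * (\<Sum>r\<in>Dg. of_int (moebius r) * real ((l div r) choose (k div r)))"
    by (simp add: sum_distrib_left algebra_simps)
  finally have "real l * real (card (prim_orbits n a b l k)) = real n * (\<Sum>r\<in>Dg. of_int (moebius r) * real ((l div r) choose (k div r)))" .
  then show ?thesis unfolding Dg_def using l0 by (simp add: field_simps)
qed
end
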